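(* Let $\mathcal{M}=(a_1^*,\dots,a_L^* )$ be a route with $a_1^*=1$ in which, for each $1\le k<L$, node $a_{k+1}^*$ is a nearest neighbor with respect to $(a_1^*,\dots,a_k^* )$. Let $K\ge1$ and let $b_1,\dots,b_K$ be distinct nodes not in $\mathcal{M}$, where $b_1$ is not a nearest neighbor with respect to $\mathcal{M}$. Let $\mathcal{M}_1=(a_1^*,\dots,a_L^*,b_1,\dots,b_K)$. Assume a nearest neighbor $a_{L+1}^*$ with respect to $\mathcal{M}$ exists. Define $\mathcal{M}_2$ as follows: - if $a_{L+1}^*\notin\{b_1,\dots,b_{K-1}\}$, then $\mathcal{M}_2=(a_1^*,\dots,a_L^*,a_{L+1}^*,b_1,\dots,b_{K-1})$; - if $a_{L+1}^*=b_k$ for some $k\in\{1,\dots,K-1\}$, then $\mathcal{M}_2=(a_1^*,\dots,a_L^*,a_{L+1}^*,b_1,\dots,b_{k-1},b_{k+1},\dots,b_K)$. Then $R_{\mathrm{DF}}(\mathcal{M}_2)\ge R_{\mathrm{DF}}(\mathcal{M}_1)$.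
   Context: Network: a finite set of nodes $\mathcal{S}=\{1,2,\dots,D\}$, $D\ge 2$. Node $1$ is the source and node $D$ is the destination. Received powers: for distinct nodes $i,t$, the power received at $t$ from $i$ is a positive real number $P_{it}$. All receivers have the same noise power $N>0$. Routes: a route is an ordered tuple of distinct nodes $\mathcal{M}=(m_1,\dots,m_L)$ with $m_1=1$ and $L\ge1$. DF with independent codewords: the reception rate of node $m_t$ ($2\le t\le L$) in route $\mathcal{M}$ is $$R_{m_t}(\mathcal{M})=\tfrac12\log\Big(1+N^{-1}\sum_{i=1}^{t-1}P_{m_i m_t}\Big).$$ The supported DF rate (for $L\ge2$) is $R_{\mathrm{DF}}(\mathcal{M})=\min_{2\le t\le L}R_{m_t}(\mathcal{M})$. Nearest neighbor: node $i\notin\mathcal{M}$ is a nearest neighbor with respect to route $\mathcal{M}$ iff $P_{mi}\ge P_{mj}$ for all $m\in\mathcal{M}$ and all $j\in\mathcal{S}\setminus(\mathcal{M}\cup\{i\})$. *)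

theory Defs
  imports "HOL-Analysis.Analysis"
begin

(* Nodes are natural numbers in S = {1..D}; node 1 is the source.
   A route is a list of distinct nodes starting with 1.
   P i t : received power at t from i; N : noise power. *)

definition is_route :: "nat \<Rightarrow> nat list \<Rightarrow> bool" where
  "is_route D M \<longleftrightarrow> M \<noteq> [] \<and> hd M = 1 \<and> distinct M \<and> set M \<subseteq> {1..D}"

(* reception rate of the t-th node (1-based, 2 <= t <= length M) of route M *)
definition rec_rate :: "(nat \<Rightarrow> nat \<Rightarrow> real) \<Rightarrow> real \<Rightarrow> nat list \<Rightarrow> nat \<Rightarrow> real" where
  "rec_rate P N M t = (1/2) * log 2 (1 + (1/N) * (\<Sum>i=1..t-1. P (M ! (i-1)) (M ! (t-1))))"

(* DF rate, meaningful for routes of length >= 2 *)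
definition R_DF :: "(nat \<Rightarrow> nat \<Rightarrow> real) \<Rightarrow> real \<Rightarrow> nat list \<Rightarrow> real" where
  "R_DF P N M = Min ((\<lambda>t. rec_rate P N M t) ` {2..length M})"

definition nearest_neighbor :: "nat \<Rightarrow> (nat \<Rightarrow> nat \<Rightarrow> real) \<Rightarrow> nat list \<Rightarrow> nat \<Rightarrow> bool" where
  "nearest_neighbor D P M i \<longleftrightarrow> i \<in> {1..D} \<and> i \<notin> set M \<and>
     (\<forall>m\<in>set M. \<forall>j\<in>{1..D} - (set M \<union> {i}). P m i \<ge> P m j)"

end

theory Submission
  imports Defs
begin

lemma split_uniq: "distinct (p@y#s) \<Longrightarrow> p@y#s = q@y#r \<Longrightarrow> p = q \<and> s = r"
proof (induction p arbitrary: q)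
  case Nil then show ?case by (cases q) auto
next
  case (Cons x p)
  show ?case
  proof (cases q)
    case Nil then show ?thesis using Cons.prems by auto
  next
    case (Cons z q')
    then have "x = z" "p @ y # s = q' @ y # r" using Cons.prems(2) \<open>q = z # q'\<close> by auto
    moreover have "distinct (p @ y # s)" using Cons.prems(1) by simp
    ultimately show ?thesis using Cons.IH \<open>q = z # q'\<close> by auto
  qed
qed

lemma rate_split:
  assumes "distinct M" "M = p @ y # s"
  shows "rec_rate P N M (length p + 1) = 1/2 * log 2 (1 + 1/N * (\<Sum>x\<in>set p. P x y))"
proof -
  have "(\<Sum>i=1..length p. P (M ! (i-1)) (M ! length p)) = (\<Sum>i<length p. P (p ! i) y)"
  proof -
    have "(\<Sum>i=1..length p. P (M ! (i-1)) (M ! length p)) = (\<Sum>i<length p. P (M ! i) (M ! length p))"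
      by (rule sum.reindex_bij_witness[where i="\<lambda>i. i+1" and j="\<lambda>i. i-1"]) auto
    also have "\<dots> = (\<Sum>i<length p. P (p ! i) y)"
      using assms(2) by (intro sum.cong) (auto simp: nth_append)
    finally show ?thesis .
  qed
  also have "\<dots> = sum_list (map (\<lambda>x. P x y) p)"
    by (simp add: sum_list_sum_nth atLeast0LessThan)
  also have "\<dots> = (\<Sum>x\<in>set p. P x y)"
    using assms by (simp add: sum_list_distinct_conv_sum_set)
  finally show ?thesis unfolding rec_rate_def by simp
qed

lemma f_mono:
  assumes "(N::real) > 0" "0 \<le> u" "u \<le> v"
  shows "1/2 * log 2 (1 + 1/N * u) \<le> 1/2 * log 2 (1 + 1/N * v)"
proof -
  have "0 \<le> 1/N * u" using assms by simp
  moreover have "1/N * u \<le> 1/N * v" using assms by (simp add: divide_right_mono)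
  ultimately show ?thesis by (subst mult_le_cancel_left_pos) (auto)
qed

theorem lemma2:
  fixes D :: nat and P :: "nat \<Rightarrow> nat \<Rightarrow> real" and N :: real
    and A :: "nat list" and bs :: "nat list" and a :: nat
  assumes D2: "D \<ge> 2"
    and Ppos: "\<And>i t. i \<in> {1..D} \<Longrightarrow> t \<in> {1..D} \<Longrightarrow> i \<noteq> t \<Longrightarrow> P i t > 0"
    and Npos: "N > 0"
    and Aroute: "is_route D A"
    and Agreedy: "\<And>k. 1 \<le> k \<Longrightarrow> k < length A \<Longrightarrow> nearest_neighbor D P (take k A) (A ! k)"
    and Kpos: "length bs \<ge> 1"
    and bs_dist: "distinct bs"
    and bs_nodes: "set bs \<subseteq> {1..D}"
    and bs_out: "set bs \<inter> set A = {}"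
    and b1_not_nn: "\<not> nearest_neighbor D P A (bs ! 0)"
    and a_nn: "nearest_neighbor D P A a"
  shows "R_DF P N
           (if a \<notin> set (butlast bs) then A @ [a] @ butlast bs
            else A @ [a] @ remove1 a bs)
         \<ge> R_DF P N (A @ bs)"
proof -
  define R where "R = (if a \<notin> set (butlast bs) then butlast bs else remove1 a bs)"
  define M1 where "M1 = A @ bs"
  define M2 where "M2 = A @ a # R"
  have goal_eq: "(if a \<notin> set (butlast bs) then A @ [a] @ butlast bs
            else A @ [a] @ remove1 a bs) = M2" unfolding M2_def R_def by simp
  have Ane: "A \<noteq> []" and Adist: "distinct A" and Anodes: "set A \<subseteq> {1..D}"
    using Aroute unfolding is_route_def by auto
  have aD: "a \<in> {1..D}" and aA: "a \<notin> set A"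
    using a_nn unfolding nearest_neighbor_def by auto
  have Rsub: "set R \<subseteq> set bs"
    unfolding R_def using set_remove1_subset[of a bs] by (auto dest: in_set_butlastD)
  have aR: "a \<notin> set R"
    unfolding R_def using bs_dist by (auto simp: set_remove1_eq)
  have Rdist: "distinct R" unfolding R_def using bs_dist by (auto simp: distinct_butlast)
  have M1dist: "distinct M1" unfolding M1_def using Adist bs_dist bs_out by auto
  have M2dist: "distinct M2" unfolding M2_def using Adist Rdist aA aR Rsub bs_out by auto
  have M1nodes: "set M1 \<subseteq> {1..D}" unfolding M1_def using Anodes bs_nodes by auto
  have M2nodes: "set M2 \<subseteq> {1..D}" unfolding M2_def using Anodes bs_nodes aD Rsub by auto
  have lenR: "length R = length bs - 1"
  proof (cases "a \<notin> set (butlast bs)")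
    case True then show ?thesis unfolding R_def by simp
  next
    case False
    then have "a \<in> set bs" by (auto dest: in_set_butlastD)
    with False show ?thesis unfolding R_def by (simp add: length_remove1)
  qed
  have len: "length M2 = length M1" unfolding M1_def M2_def using lenR Kpos by simp
  have nonneg: "\<And>M q y r. distinct M \<Longrightarrow> set M \<subseteq> {1..D} \<Longrightarrow> M = q @ y # r \<Longrightarrow>
      x \<in> set q \<Longrightarrow> 0 \<le> P x y" for x
  proof -
    fix M q y r assume "distinct M" "set M \<subseteq> {1..D}" "M = q @ y # r" "x \<in> set q"
    then have "x \<noteq> y" "x \<in> {1..D}" "y \<in> {1..D}" by auto
    then show "0 \<le> P x y" using Ppos by (simp add: less_imp_le)
  qed
  have KEY: "\<exists>q y' r. M1 = q @ y' # r \<and> q \<noteq> [] \<and> (\<Sum>x\<in>set q. P x y') \<le> (\<Sum>x\<in>set p. P x y)"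
    if sp: "M2 = p @ y # s" and pne: "p \<noteq> []" for p y s
  proof -
    have "y \<in> set M2" using sp by simp
    then have "y \<in> set A \<or> y = a \<or> y \<in> set R" unfolding M2_def by auto
    moreover
    { assume yA: "y \<in> set A"
      then obtain A1 A2 where A12: "A = A1 @ y # A2" by (meson split_list)
      have "M2 = A1 @ y # (A2 @ a # R)" unfolding M2_def A12 by simp
      with sp M2dist have "p = A1" using split_uniq by metis
      moreover have "M1 = A1 @ y # (A2 @ bs)" unfolding M1_def A12 by simp
      ultimately have ?thesis using pne by blast }
    moreover
    { assume ya: "y = a"
      have "M2 = A @ a # R" unfolding M2_def by simp
      with sp M2dist ya have pA: "p = A" using split_uniq by metis
      obtain b bt where bs: "bs = b # bt" using Kpos by (cases bs) auto
      have "b \<noteq> a" using b1_not_nn a_nn bs by auto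
      moreover have "b \<in> {1..D}" "b \<notin> set A" using bs bs_nodes bs_out by auto
      ultimately have "\<forall>m\<in>set A. P m b \<le> P m a" using a_nn unfolding nearest_neighbor_def by auto
      then have "(\<Sum>x\<in>set A. P x b) \<le> (\<Sum>x\<in>set A. P x a)" by (intro sum_mono) auto
      moreover have "M1 = A @ b # bt" unfolding M1_def bs by simp
      ultimately have ?thesis using pA ya Ane by blast }
    moreover
    { assume yR: "y \<in> set R" and yA: "y \<notin> set A" and ya: "y \<noteq> a"
      then have ybs: "y \<in> set bs" using Rsub by auto
      then obtain us vs where bs: "bs = us @ y # vs" by (meson split_list)
      have M1s: "M1 = (A @ us) @ y # vs" unfolding M1_def bs by simp
      have sub: "set (A @ us) \<subseteq> set p"
      proof (cases "a \<notin> set (butlast bs)")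
        case True
        then have RR: "R = butlast bs" unfolding R_def by simp
        have "vs \<noteq> []"
        proof
          assume "vs = []"
          then have "butlast bs = us" using bs by (simp add: butlast_append)
          then show False using yR RR bs bs_dist by auto
        qed
        then have "R = us @ y # butlast vs" using RR bs by (simp add: butlast_append)
        then have "M2 = (A @ a # us) @ y # butlast vs" unfolding M2_def by simp
        with sp M2dist have "p = A @ a # us" using split_uniq by metis
        then show ?thesis by auto
      next
        case False
        then have RR: "R = remove1 a bs" unfolding R_def by simp
        have "a \<in> set bs" using False by (auto dest: in_set_butlastD)
        then have "a \<in> set us \<or> a \<in> set vs" using bs ya by auto
        then show ?thesis
        proof
          assume aus: "a \<in> set us"
          then have "R = remove1 a us @ y # vs" using RR bs by (simp add: remove1_append)
          then have "M2 = (A @ a # remove1 a us) @ y # vs" unfolding M2_def by simp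
          with sp M2dist have "p = A @ a # remove1 a us" using split_uniq by metis
          moreover have "distinct us" using bs_dist bs by simp
          ultimately show ?thesis by (auto simp: set_remove1_eq)
        next
          assume avs: "a \<in> set vs"
          then have "a \<notin> set us" using bs_dist bs by auto
          then have "R = us @ y # remove1 a vs" using RR bs ya by (simp add: remove1_append)
          then have "M2 = (A @ a # us) @ y # remove1 a vs" unfolding M2_def by simp
          with sp M2dist have "p = A @ a # us" using split_uniq by metis
          then show ?thesis by auto
        qed
      qed
      have "(\<Sum>x\<in>set (A @ us). P x y) \<le> (\<Sum>x\<in>set p. P x y)"
        by (rule sum_mono2) (use sub nonneg[OF M2dist M2nodes sp] in auto)
      then have ?thesis using M1s Ane by blast }
    ultimately show ?thesis by blast
  qed
  let ?n = "length M1"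
  have n2: "?n \<ge> 2" unfolding M1_def using Ane Kpos by (cases A) auto
  have "Min ((\<lambda>t. rec_rate P N M1 t) ` {2..?n}) \<le> Min ((\<lambda>t. rec_rate P N M2 t) ` {2..?n})"
  proof (subst Min_ge_iff, simp, use n2 in simp, intro ballI)
    fix v assume "v \<in> (\<lambda>t. rec_rate P N M2 t) ` {2..?n}"
    then obtain t where t: "t \<in> {2..?n}" and v: "v = rec_rate P N M2 t" by auto
    define p where "p = take (t-1) M2"
    define y where "y = M2 ! (t-1)"
    define s where "s = drop t M2"
    have tl: "t - 1 < length M2" using t len by auto
    have sp: "M2 = p @ y # s" unfolding p_def y_def s_def
      using id_take_nth_drop[OF tl] t by (simp)
    have lp: "length p = t - 1" unfolding p_def using tl by simp
    have pne: "p \<noteq> []" using lp t by auto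
    have vv: "v = 1/2 * log 2 (1 + 1/N * (\<Sum>x\<in>set p. P x y))"
      using rate_split[OF M2dist sp, of P N] lp t v by simp
    obtain q y' r where qr: "M1 = q @ y' # r" "q \<noteq> []"
      and le: "(\<Sum>x\<in>set q. P x y') \<le> (\<Sum>x\<in>set p. P x y)"
      using KEY[OF sp pne] by blast
    have ww: "rec_rate P N M1 (length q + 1) = 1/2 * log 2 (1 + 1/N * (\<Sum>x\<in>set q. P x y'))"
      using rate_split[OF M1dist qr(1)] .
    have qin: "length q + 1 \<in> {2..?n}" using qr by (cases q) auto
    have "Min ((\<lambda>t. rec_rate P N M1 t) ` {2..?n}) \<le> rec_rate P N M1 (length q + 1)"
      by (rule Min_le) (use qin in auto)
    also have "\<dots> \<le> v" unfolding ww vv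
      by (rule f_mono[OF Npos _ le], rule sum_nonneg) (use nonneg[OF M1dist M1nodes qr(1)] in auto)
    finally show "Min ((\<lambda>t. rec_rate P N M1 t) ` {2..?n}) \<le> v" .
  qed
  then show ?thesis unfolding goal_eq R_DF_def using len M1_def by simp
qed

end
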